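(* Let $\upsilon\in(0,1]$, $P_b>0$, $h>0$, $T_c>0$, $\sigma^2>0$, $B>0$, $R\ge 0$ and $\ell>0$. Define $E_{\mathrm{MPT}}(t)=\upsilon P_bh(T_c-t)$ and $E_{\mathrm{off}}(t)=(2^{\frac{\ell}{Bt}}-1)\frac{\sigma^2}{h}t$, and consider Problem P8: maximize $E_{\mathrm{MPT}}(t)-E_{\mathrm{off}}(t)$ over $t$ subject to $0<t\le T_c$ and $R+E_{\mathrm{MPT}}(t)-E_{\mathrm{off}}(t)\ge 0$. Let $t^*$ be the optimal $t$ and $G_{\mathrm{off}}(\ell,R,h)=E_{\mathrm{MPT}}(t^* )-E_{\mathrm{off}}(t^* )$. With $W$ the principal branch of the Lambert function ($W(x)e^{W(x)}=x$) and $w=W\!\left(\frac{\upsilon P_bh^2}{\sigma^2e}-\frac1e\right)$, define $$\rho(h)=\frac{\ln 2}{B(1+w)},\quad y(h)=\frac{\sigma^2\ln 2}{Bh}e^{w+1},\quad c=\frac{T_cB(1+w)}{\ln 2},\quad c'=BT_c\log_2\!\left(1+\frac{Rh}{\sigma^2T_c}\right).$$ Then: (1) if either (a) $R\le\frac{BT_cy(h)}{\ln2}-\frac{\sigma^2}{h}T_c$ and $\ell\le\frac{\upsilon P_bhT_c+R}{y(h)}$, or (b) $R>\frac{BT_cy(h)}{\ln2}-\frac{\sigma^2}{h}T_c$ and $\ell<c$, then $t^*=\rho(h)\ell$ and $G_{\mathrm{off}}(\ell,R,h)=\upsilon P_bhT_c-y(h)\ell$; (2) if $R>\frac{BT_cy(h)}{\ln2}-\frac{\sigma^2}{h}T_c$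 and $c\le\ell\le c'$, then $t^*=T_c$ and $G_{\mathrm{off}}(\ell,R,h)=-(2^{\frac{\ell}{BT_c}}-1)\frac{\sigma^2}{h}T_c$; (3) for all other combinations of $R$ and $\ell$, Problem P8 is infeasible.
   Context: This concerns offloading in a single fading block of duration $T_c$ with channel power gain $h$: $\ell$ bits are to be offloaded, $R$ is residual energy carried over from previous blocks, the block is split into power transfer of length $T_c-t$ and transmission of length $t$ at fixed rate over bandwidth $B$ with noise variance $\sigma^2$, $\upsilon$ is the energy conversion efficiency and $P_b$ the base-station transmit power. *)

theory Defs
  imports "HOL-Analysis.Analysis"
begin

text \<open>Principal branch of the Lambert W function on [-1/e, \<infinity>):
  the unique w \<ge> -1 with w * exp w = x.\<close>
definition lambertW :: "real \<Rightarrow> real" where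
  "lambertW x = (THE w. w \<ge> -1 \<and> w * exp w = x)"

definition E_MPT :: "real \<Rightarrow> real \<Rightarrow> real \<Rightarrow> real \<Rightarrow> real \<Rightarrow> real" where
  "E_MPT \<upsilon> Pb h Tc t = \<upsilon> * Pb * h * (Tc - t)"

definition E_off :: "real \<Rightarrow> real \<Rightarrow> real \<Rightarrow> real \<Rightarrow> real \<Rightarrow> real" where
  "E_off B \<sigma>2 h l t = (2 powr (l / (B * t)) - 1) * (\<sigma>2 / h) * t"

definition P8_obj :: "real \<Rightarrow> real \<Rightarrow> real \<Rightarrow> real \<Rightarrow> real \<Rightarrow> real \<Rightarrow> real \<Rightarrow> real \<Rightarrow> real" where
  "P8_obj \<upsilon> Pb h Tc B \<sigma>2 l t = E_MPT \<upsilon> Pb h Tc t - E_off B \<sigma>2 h l t"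

definition P8_feasible :: "real \<Rightarrow> real \<Rightarrow> real \<Rightarrow> real \<Rightarrow> real \<Rightarrow> real \<Rightarrow> real \<Rightarrow> real \<Rightarrow> real \<Rightarrow> bool" where
  "P8_feasible \<upsilon> Pb h Tc B \<sigma>2 R l t \<longleftrightarrow>
     0 < t \<and> t \<le> Tc \<and> R + E_MPT \<upsilon> Pb h Tc t - E_off B \<sigma>2 h l t \<ge> 0"

definition P8_opt :: "real \<Rightarrow> real \<Rightarrow> real \<Rightarrow> real \<Rightarrow> real \<Rightarrow> real \<Rightarrow> real \<Rightarrow> real \<Rightarrow> real \<Rightarrow> bool" where
  "P8_opt \<upsilon> Pb h Tc B \<sigma>2 R l t \<longleftrightarrow>
     P8_feasible \<upsilon> Pb h Tc B \<sigma>2 R l t \<and>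
     (\<forall>s. P8_feasible \<upsilon> Pb h Tc B \<sigma>2 R l s \<longrightarrow>
          P8_obj \<upsilon> Pb h Tc B \<sigma>2 l s \<le> P8_obj \<upsilon> Pb h Tc B \<sigma>2 l t)"

definition G_off :: "real \<Rightarrow> real \<Rightarrow> real \<Rightarrow> real \<Rightarrow> real \<Rightarrow> real \<Rightarrow> real \<Rightarrow> real \<Rightarrow> real" where
  "G_off \<upsilon> Pb Tc B \<sigma>2 l R h =
     P8_obj \<upsilon> Pb h Tc B \<sigma>2 l (THE t. P8_opt \<upsilon> Pb h Tc B \<sigma>2 R l t)"

end

theory Submission
  imports Defs
begin


lemma exp_strict: assumes "(x::real) \<noteq> 0" shows "1 + x < exp x"
proof (cases "1 + x/2 \<ge> 0")
  case True
  have "exp x = exp (x/2)^2" by (simp add: power2_eq_square flip: exp_add)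
  also have "\<dots> \<ge> (1 + x/2)^2" using True exp_ge_add_one_self[of "x/2"] power_mono by blast
  finally have "exp x \<ge> (1 + x/2)^2" .
  moreover have "x*x > 0" using assms by (auto simp: zero_less_mult_iff)
  then have "(1 + x/2)^2 > 1 + x" by (simp add: power2_eq_square field_simps)
  ultimately show ?thesis by linarith
next
  case False
  then have "1 + x < 0" by linarith
  then show ?thesis using exp_gt_zero[of x] by linarith
qed

lemma xexp_mono: assumes "-1 \<le> (u::real)" "u < v" shows "u * exp u < v * exp v"
proof (cases "u \<ge> 0")
  case True
  then show ?thesis using assms by (intro mult_strict_mono) auto
next
  case False
  define d where "d = v - u"
  have d: "d > 0" using assms d_def by simp
  have e: "exp (-d) > 1 - d" using exp_strict[of "-d"] d by simp
  have "u * exp (-d) < u * (1 - d)" using e False by (simp add: mult_less_cancel_left)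
  also have "\<dots> \<le> v"
  proof -
    have v: "v = u + d" by (simp add: d_def)
    have "(-u) * d \<le> 1 * d" using assms(1) d by (intro mult_right_mono) auto
    then show ?thesis unfolding v by (simp add: algebra_simps)
  qed
  finally have "u * exp (-d) < v" .
  then have "u * exp (-d) * exp v < v * exp v" by simp
  moreover have "exp (-d) * exp v = exp u" by (simp add: d_def flip: exp_add)
  ultimately show ?thesis by (simp add: mult.assoc)
qed

lemma lambertW: assumes "x > - 1 / exp 1"
  shows "lambertW x > -1 \<and> lambertW x * exp (lambertW x) = x"
proof -
  define b where "b = max 1 x"
  have "(-1) * exp (-1) \<le> x" using assms by (simp add: exp_minus field_simps)
  moreover have "x \<le> b * exp b"
  proof -
    have "exp b \<ge> 1" using b_def by simp
    then have "b * exp b \<ge> b * 1" using b_def by (intro mult_left_mono) auto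
    then show ?thesis using b_def by simp
  qed
  moreover have "-1 \<le> b" using b_def by simp
  moreover have "\<forall>w. -1 \<le> w \<and> w \<le> b \<longrightarrow> isCont (\<lambda>w. w * exp w) w"
    by (intro allI impI continuous_intros)
  ultimately obtain w where w: "-1 \<le> w" "w \<le> b" "w * exp w = x"
    using IVT[of "\<lambda>w. w * exp w" "-1" x b] by blast
  have uniq: "\<And>v. v \<ge> -1 \<and> v * exp v = x \<Longrightarrow> v = w"
  proof -
    fix v assume v: "v \<ge> -1 \<and> v * exp v = x"
    show "v = w"
    proof (rule ccontr)
      assume "v \<noteq> w"
      then consider "v < w" | "w < v" by linarith
      then show False
      proof cases
        case 1 then show False using xexp_mono[of v w] v w by simp
      next
        case 2 then show False using xexp_mono[of w v] v w by simp
      qed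
    qed
  qed
  have "lambertW x = w" unfolding lambertW_def
  proof (rule the_equality)
    show "w \<ge> -1 \<and> w * exp w = x" using w by simp
  next
    fix v assume "v \<ge> -1 \<and> v * exp v = x" then show "v = w" by (rule uniq)
  qed
  moreover have "w \<noteq> -1"
  proof
    assume "w = -1"
    then have "x = - exp (-1)" using w(3) by simp
    also have "\<dots> = -1 / exp 1" by (simp add: exp_minus divide_inverse)
    finally show False using assms by simp
  qed
  ultimately show ?thesis using w by simp
qed
lemma core1:
  fixes s w x :: real
  assumes "s > 0"
  shows "w * exp (w+1) + exp x \<ge> x * exp (w+1)"
    and "x \<noteq> w + 1 \<Longrightarrow> w * exp (w+1) + exp x > x * exp (w+1)"
proof -
  have e: "exp x = exp (w+1) * exp (x - (w+1))" by (simp flip: exp_add)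
  have "exp (x - (w+1)) \<ge> 1 + (x - (w+1))" by (rule exp_ge_add_one_self)
  then have "exp (w+1) * exp (x - (w+1)) \<ge> exp (w+1) * (1 + (x - (w+1)))"
    by (intro mult_left_mono) auto
  then show "w * exp (w+1) + exp x \<ge> x * exp (w+1)" unfolding e by (simp add: algebra_simps)
  assume "x \<noteq> w + 1"
  then have "exp (x - (w+1)) > 1 + (x - (w+1))" by (intro exp_strict) simp
  then have "exp (w+1) * exp (x - (w+1)) > exp (w+1) * (1 + (x - (w+1)))"
    by (intro mult_strict_left_mono) auto
  then show "w * exp (w+1) + exp x > x * exp (w+1)" unfolding e by (simp add: algebra_simps)
qed

lemma xm1exp_mono:
  fixes X Y :: real
  assumes "0 < Y" "Y \<le> X"
  shows "exp Y * (Y - 1) \<le> exp X * (X - 1)"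
proof (cases "X \<ge> 1")
  case True
  have "exp X = exp Y * exp (X - Y)" by (simp flip: exp_add)
  moreover have "exp (X - Y) \<ge> 1 + (X - Y)" by (rule exp_ge_add_one_self)
  ultimately have P1: "exp X * (X - 1) \<ge> exp Y * (1 + (X - Y)) * (X - 1)"
    using True by (intro mult_right_mono) (auto intro: mult_left_mono)
  have "(1 + (X - Y)) * (X - 1) \<ge> Y - 1"
  proof -
    have "(1 + (X - Y)) * (X - 1) - (Y - 1) = (X - Y) * X" by (simp add: algebra_simps)
    moreover have "(X - Y) * X \<ge> 0" using assms by simp
    ultimately show ?thesis by linarith
  qed
  then have P3: "exp Y * ((1 + (X - Y)) * (X - 1)) \<ge> exp Y * (Y - 1)" by (intro mult_left_mono) auto
  have "exp Y * (1 + (X - Y)) * (X - 1) = exp Y * ((1 + (X - Y)) * (X - 1))" by simp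
  then show ?thesis using P1 P3 by linarith
next
  case False
  have "exp Y = exp X * exp (Y - X)" by (simp flip: exp_add)
  moreover have "exp (Y - X) \<ge> 1 + (Y - X)" by (rule exp_ge_add_one_self)
  ultimately have P1: "exp Y * (1 - Y) \<ge> exp X * (1 + (Y - X)) * (1 - Y)"
    using False assms by (intro mult_right_mono) (auto intro: mult_left_mono)
  have "(1 + (Y - X)) * (1 - Y) \<ge> 1 - X"
  proof -
    have "(1 + (Y - X)) * (1 - Y) - (1 - X) = Y * (X - Y)" by (simp add: algebra_simps)
    moreover have "Y * (X - Y) \<ge> 0" using assms by simp
    ultimately show ?thesis by linarith
  qed
  then have P3: "exp X * ((1 + (Y - X)) * (1 - Y)) \<ge> exp X * (1 - X)" by (intro mult_left_mono) auto
  have "exp X * (1 + (Y - X)) * (1 - Y) = exp X * ((1 + (Y - X)) * (1 - Y))" by simp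
  then have "exp Y * (1 - Y) \<ge> exp X * (1 - X)" using P1 P3 by linarith
  then show ?thesis by (simp add: algebra_simps)
qed

lemma core2:
  fixes w x X :: real
  assumes "w > -1" "X \<ge> 1 + w" "x > X"
  shows "x * (w * exp (w+1) + exp X) < X * (w * exp (w+1) + exp x)"
proof -
  have X0: "X > 0" using assms by simp
  have "exp (x - X) > 1 + (x - X)" using assms by (intro exp_strict) simp
  then have "X * (exp X * exp (x - X)) > X * (exp X * (1 + (x - X)))"
    using X0 by (intro mult_strict_left_mono) auto
  then have A: "X * exp x > X * exp X * (1 + (x - X))" by (simp add: mult.assoc flip: exp_add)
  have B: "w * exp (w+1) \<le> exp X * (X - 1)"
    using xm1exp_mono[of "w+1" X] assms by (simp add: algebra_simps)
  have "w * exp (w+1) * (x - X) \<le> exp X * (X - 1) * (x - X)"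
    using B assms by (intro mult_right_mono) auto
  then show ?thesis using A by (simp add: algebra_simps)
qed


lemma obj_eq:
  assumes "t > 0" "B > 0"
  shows "P8_obj \<upsilon> Pb h Tc B \<sigma>2 l t =
    \<upsilon>*Pb*h*Tc + (-(\<upsilon>*Pb*h)*t - (\<sigma>2/h)*t*(exp ((ln 2/B)*l/t) - 1))"
proof -
  have "l/(B*t)*ln 2 = (ln 2/B)*l/t" using assms by (simp add: field_simps)
  then have "2 powr (l/(B*t)) = exp ((ln 2/B)*l/t)" by (simp add: powr_def)
  then show ?thesis unfolding P8_obj_def E_MPT_def E_off_def by (simp add: algebra_simps)
qed

lemma feas_eq:
  "P8_feasible \<upsilon> Pb h Tc B \<sigma>2 R l t \<longleftrightarrow> 0 < t \<and> t \<le> Tc \<and> R + P8_obj \<upsilon> Pb h Tc B \<sigma>2 l t \<ge> 0"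
  unfolding P8_feasible_def P8_obj_def by (simp add: algebra_simps)

theorem corollary3:
  fixes \<upsilon> Pb h Tc \<sigma>2 B R l :: real
  assumes "0 < \<upsilon>" "\<upsilon> \<le> 1" "Pb > 0" "h > 0" "Tc > 0" "\<sigma>2 > 0" "B > 0" "R \<ge> 0" "l > 0"
  defines "w \<equiv> lambertW (\<upsilon> * Pb * h\<^sup>2 / (\<sigma>2 * exp 1) - 1 / exp 1)"
  defines "\<rho> \<equiv> ln 2 / (B * (1 + w))"
  defines "y \<equiv> \<sigma>2 * ln 2 / (B * h) * exp (w + 1)"
  defines "c \<equiv> Tc * B * (1 + w) / ln 2"
  defines "c' \<equiv> B * Tc * log 2 (1 + R * h / (\<sigma>2 * Tc))"
  defines "thr \<equiv> B * Tc * y / ln 2 - \<sigma>2 / h * Tc"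
  shows
    "(((R \<le> thr \<and> l \<le> (\<upsilon> * Pb * h * Tc + R) / y) \<or> (R > thr \<and> l < c)) \<longrightarrow>
        (\<forall>t. P8_opt \<upsilon> Pb h Tc B \<sigma>2 R l t \<longleftrightarrow> t = \<rho> * l) \<and>
        G_off \<upsilon> Pb Tc B \<sigma>2 l R h = \<upsilon> * Pb * h * Tc - y * l)
     \<and> ((R > thr \<and> c \<le> l \<and> l \<le> c') \<longrightarrow>
        (\<forall>t. P8_opt \<upsilon> Pb h Tc B \<sigma>2 R l t \<longleftrightarrow> t = Tc) \<and>
        G_off \<upsilon> Pb Tc B \<sigma>2 l R h = - (2 powr (l / (B * Tc)) - 1) * (\<sigma>2 / h) * Tc)
     \<and> (\<not> ((R \<le> thr \<and> l \<le> (\<upsilon> * Pb * h * Tc + R) / y) \<or> (R > thr \<and> l < c)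
           \<or> (R > thr \<and> c \<le> l \<and> l \<le> c')) \<longrightarrow>
        \<not> (\<exists>t. P8_feasible \<upsilon> Pb h Tc B \<sigma>2 R l t))"
  
proof -
  define a where "a = \<upsilon>*Pb*h"
  define s where "s = \<sigma>2/h"
  define k where "k = ln 2 / B"
  define F where "F t = -a*t - s*t*(exp (k*l/t) - 1)" for t
  define t0 where "t0 = k*l/(1+w)"
  define c0 where "c0 = w * exp (w+1)"
  have a0: "a > 0" using assms unfolding a_def by simp
  have s0: "s > 0" using assms unfolding s_def by simp
  have k0: "k > 0" using assms unfolding k_def by simp
  have obj: "\<And>t. t > 0 \<Longrightarrow> P8_obj \<upsilon> Pb h Tc B \<sigma>2 l t = a*Tc + F t"
    using obj_eq assms(7) unfolding a_def s_def k_def F_def by simp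
  have feas: "\<And>t. P8_feasible \<upsilon> Pb h Tc B \<sigma>2 R l t \<longleftrightarrow> 0 < t \<and> t \<le> Tc \<and> R + a*Tc + F t \<ge> 0"
    using feas_eq obj by (auto simp: algebra_simps)
  have "\<upsilon> * Pb * h\<^sup>2 / (\<sigma>2 * exp 1) > 0" using assms by simp
  then have "\<upsilon> * Pb * h\<^sup>2 / (\<sigma>2 * exp 1) - 1 / exp 1 > - 1 / exp 1" by simp
  from lambertW[OF this] have W: "w > -1" "w * exp w = \<upsilon> * Pb * h\<^sup>2 / (\<sigma>2 * exp 1) - 1 / exp 1"
    unfolding w_def by auto
  have 1: "1 + w > 0" using W by simp
  have ac: "a = s * (1 + c0)"
  proof -
    have "c0 = w * exp w * exp 1" unfolding c0_def by (simp add: mult.assoc flip: exp_add)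
    also have "\<dots> = \<upsilon> * Pb * h\<^sup>2 / \<sigma>2 - 1" using W(2) assms by (simp add: field_simps)
    finally show ?thesis unfolding a_def s_def using assms by (simp add: field_simps power2_eq_square)
  qed
  have ydef: "y = s*k*exp(w+1)" unfolding y_def s_def k_def by (simp add: field_simps)
  have y0: "y > 0" using ydef s0 k0 by simp
  have rho: "\<rho> * l = t0" unfolding \<rho>_def t0_def k_def by (simp add: field_simps)
  have t00: "t0 > 0" unfolding t0_def using k0 1 assms by simp
  have cdef: "c = Tc*(1+w)/k" unfolding c_def k_def using assms by (simp add: field_simps)
  have lc: "l < c \<longleftrightarrow> t0 < Tc" unfolding cdef t0_def using k0 1 by (simp add: field_simps)
  have lc2: "l \<le> c \<longleftrightarrow> t0 \<le> Tc" unfolding cdef t0_def using k0 1 by (simp add: field_simps)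
  have lc': "c \<le> l \<longleftrightarrow> Tc \<le> t0" using lc by linarith
  have thrdef: "thr = Tc * (s * exp (w+1)) - s * Tc" unfolding thr_def ydef k_def s_def using assms
    by (simp add: field_simps)
  have yc: "a*Tc + thr = y*c" unfolding thrdef ydef cdef ac c0_def using k0 by (simp add: field_simps)
  have Ft0: "F t0 = - y*l"
  proof -
    have "k*l/t0 = 1+w" unfolding t0_def using k0 1 assms by (simp add: field_simps)
    moreover have "y*l = s*exp(w+1)*t0*(1+w)" unfolding ydef t0_def using 1 by (simp add: field_simps)
    ultimately show ?thesis unfolding F_def ac c0_def by (simp add: algebra_simps)
  qed
  have Fle: "F t \<le> F t0" and Flt: "t \<noteq> t0 \<Longrightarrow> F t < F t0" if "t > 0" for t
  proof -
    define x where "x = k*l/t"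
    have kl: "k*l = x*t" unfolding x_def using that by simp
    have Ft: "F t = - s*t*(c0 + exp x)" unfolding F_def x_def[symmetric] ac by (simp add: algebra_simps)
    have Ft0': "F t0 = - s*t*(x*exp(w+1))" unfolding Ft0 ydef by (simp add: kl algebra_simps)
    have st: "s*t > 0" using s0 that by simp
    show "F t \<le> F t0" unfolding Ft Ft0' c0_def
      using core1(1)[OF s0, where w=w and x=x] st by (simp add: mult_left_mono)
    assume "t \<noteq> t0"
    then have "x \<noteq> w + 1" unfolding t0_def using kl 1 that by (auto simp: field_simps)
    then show "F t < F t0" unfolding Ft Ft0' c0_def
      using core1(2)[OF s0, where w=w and x=x] st by (simp add: mult_strict_left_mono)
  qed
  have FTc: "F t < F Tc" if "0 < t" "t < Tc" "Tc \<le> t0" for t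
  proof -
    define x where "x = k*l/t"
    define X where "X = k*l/Tc"
    have xt: "t = k*l/x" unfolding x_def using that k0 assms by simp
    have XT: "Tc = k*l/X" unfolding X_def using that k0 assms by simp
    have "F t = - s*t*(c0 + exp x)" unfolding F_def x_def[symmetric] ac by (simp add: algebra_simps)
    also have "\<dots> = - s*(k*l)*((c0 + exp x)/x)" by (subst xt) simp
    finally have Ft: "F t = - s*(k*l)*((c0 + exp x)/x)" .
    have "F Tc = - s*Tc*(c0 + exp X)" unfolding F_def X_def[symmetric] ac by (simp add: algebra_simps)
    also have "\<dots> = - s*(k*l)*((c0 + exp X)/X)" by (subst XT) simp
    finally have FT: "F Tc = - s*(k*l)*((c0 + exp X)/X)" .
    have X0: "X > 0" unfolding X_def using k0 assms by simp
    have xX: "x > X" unfolding x_def X_def using k0 assms that by (simp add: divide_strict_left_mono)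
    have X1: "X \<ge> 1 + w" using that(3) unfolding X_def t0_def using k0 1 assms
      by (simp add: field_simps)
    have "x * (c0 + exp X) < X * (c0 + exp x)" unfolding c0_def using core2[OF W(1) X1 xX] .
    then have "(c0 + exp X)/X < (c0 + exp x)/x" using X0 xX by (simp add: field_simps)
    moreover have "s*(k*l) > 0" using s0 k0 assms by simp
    ultimately have "s*(k*l)*((c0 + exp X)/X) < s*(k*l)*((c0 + exp x)/x)"
      by (rule mult_strict_left_mono)
    then show ?thesis unfolding Ft FT by linarith
  qed
  have FTcval: "F Tc = - a*Tc - s*Tc*(2 powr (l/(B*Tc)) - 1)"
  proof -
    have "l/(B*Tc)*ln 2 = k*l/Tc" unfolding k_def using assms by (simp add: field_simps)
    then show ?thesis unfolding F_def by (simp add: powr_def algebra_simps)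
  qed
  have c'iff: "l \<le> c' \<longleftrightarrow> R + a*Tc + F Tc \<ge> 0"
  proof -
    have "R * h / (\<sigma>2 * Tc) \<ge> 0" using assms(4,5,6,8) by simp
    then have z: "1 + R * h / (\<sigma>2 * Tc) > 0" by linarith
    have "l \<le> c' \<longleftrightarrow> l/(B*Tc) \<le> log 2 (1 + R * h / (\<sigma>2 * Tc))"
      unfolding c'_def using assms by (simp add: field_simps)
    also have "\<dots> \<longleftrightarrow> 2 powr (l/(B*Tc)) \<le> 1 + R * h / (\<sigma>2 * Tc)" using le_log_iff[OF _ z] by simp
    also have "\<dots> \<longleftrightarrow> s*Tc*(2 powr (l/(B*Tc)) - 1) \<le> R"
      unfolding s_def using assms by (simp add: field_simps)
    finally show ?thesis unfolding FTcval by simp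
  qed
  have objt0: "P8_obj \<upsilon> Pb h Tc B \<sigma>2 l t0 = a*Tc - y*l" using obj[OF t00] Ft0 by simp
  have objTc: "P8_obj \<upsilon> Pb h Tc B \<sigma>2 l Tc = - (2 powr (l / (B * Tc)) - 1) * (\<sigma>2 / h) * Tc"
    using obj[OF assms(5)] FTcval unfolding a_def s_def by (simp add: algebra_simps)
  have G: "G_off \<upsilon> Pb Tc B \<sigma>2 l R h = P8_obj \<upsilon> Pb h Tc B \<sigma>2 l t'"
    if "\<forall>t. P8_opt \<upsilon> Pb h Tc B \<sigma>2 R l t \<longleftrightarrow> t = t'" for t'
  proof -
    have "(THE t. P8_opt \<upsilon> Pb h Tc B \<sigma>2 R l t) = t'" using that by simp
    then show ?thesis unfolding G_off_def by simp
  qed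
  show ?thesis
  proof (intro conjI impI)
    assume H: "(R \<le> thr \<and> l \<le> (\<upsilon> * Pb * h * Tc + R) / y) \<or> (R > thr \<and> l < c)"
    have ok: "t0 \<le> Tc \<and> R + a*Tc - y*l \<ge> 0"
      using H
    proof
      assume H1: "R \<le> thr \<and> l \<le> (\<upsilon> * Pb * h * Tc + R) / y"
      then have "y*l \<le> a*Tc + R" unfolding a_def using y0 by (simp add: field_simps)
      then have "y*l \<le> y*c" using yc H1 by linarith
      then have "l \<le> c" using y0 by simp
      then show ?thesis using lc2 \<open>y*l \<le> a*Tc + R\<close> by simp
    next
      assume H2: "R > thr \<and> l < c"
      then have "y*l < y*c" using y0 by simp
      then show ?thesis using H2 lc yc by linarith
    qed
    have opt: "\<forall>t. P8_opt \<upsilon> Pb h Tc B \<sigma>2 R l t \<longleftrightarrow> t = t0"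
    proof (intro allI iffI)
      fix t assume "P8_opt \<upsilon> Pb h Tc B \<sigma>2 R l t"
      then have ft: "P8_feasible \<upsilon> Pb h Tc B \<sigma>2 R l t" and
        le: "P8_obj \<upsilon> Pb h Tc B \<sigma>2 l t0 \<le> P8_obj \<upsilon> Pb h Tc B \<sigma>2 l t"
        unfolding P8_opt_def using ok t00 feas Ft0 by auto
      have t: "t > 0" using ft feas by simp
      show "t = t0"
      proof (rule ccontr)
        assume "t \<noteq> t0"
        then have "F t < F t0" using Flt t by simp
        then show False using le obj[OF t] obj[OF t00] by simp
      qed
    next
      fix t assume "t = t0"
      have "P8_obj \<upsilon> Pb h Tc B \<sigma>2 l u \<le> P8_obj \<upsilon> Pb h Tc B \<sigma>2 l t0"
        if "P8_feasible \<upsilon> Pb h Tc B \<sigma>2 R l u" for u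
      proof -
        have u: "u > 0" using that feas by simp
        show ?thesis using obj[OF u] obj[OF t00] Fle[OF u] by simp
      qed
      moreover have "P8_feasible \<upsilon> Pb h Tc B \<sigma>2 R l t0" using feas ok t00 Ft0 by simp
      ultimately show "P8_opt \<upsilon> Pb h Tc B \<sigma>2 R l t"
        unfolding P8_opt_def \<open>t = t0\<close> by blast
    qed
    show "\<forall>t. P8_opt \<upsilon> Pb h Tc B \<sigma>2 R l t \<longleftrightarrow> t = \<rho> * l" using opt rho by simp
    show "G_off \<upsilon> Pb Tc B \<sigma>2 l R h = \<upsilon> * Pb * h * Tc - y * l"
      using G[OF opt] objt0 unfolding a_def by simp
  next
    assume H: "R > thr \<and> c \<le> l \<and> l \<le> c'"
    then have Tt0: "Tc \<le> t0" using lc' by simp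
    have fT: "R + a*Tc + F Tc \<ge> 0" using H c'iff by simp
    have opt: "\<forall>t. P8_opt \<upsilon> Pb h Tc B \<sigma>2 R l t \<longleftrightarrow> t = Tc"
    proof (intro allI iffI)
      fix t assume "P8_opt \<upsilon> Pb h Tc B \<sigma>2 R l t"
      then have ft: "P8_feasible \<upsilon> Pb h Tc B \<sigma>2 R l t" and
        le: "P8_obj \<upsilon> Pb h Tc B \<sigma>2 l Tc \<le> P8_obj \<upsilon> Pb h Tc B \<sigma>2 l t"
        unfolding P8_opt_def using fT feas assms(5) by auto
      have t: "t > 0" "t \<le> Tc" using ft feas by auto
      show "t = Tc"
      proof (rule ccontr)
        assume "t \<noteq> Tc"
        then have "F t < F Tc" using FTc t Tt0 by simp
        then show False using le obj[OF t(1)] obj[OF assms(5)] by simp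
      qed
    next
      fix t assume tT: "t = Tc"
      have "F s' \<le> F Tc" if "0 < s'" "s' \<le> Tc" for s'
        using FTc[of s'] that Tt0 by (cases "s' = Tc") auto
      then show "P8_opt \<upsilon> Pb h Tc B \<sigma>2 R l t"
        unfolding P8_opt_def tT using fT feas assms(5) obj by (auto simp: algebra_simps)
    qed
    show "\<forall>t. P8_opt \<upsilon> Pb h Tc B \<sigma>2 R l t \<longleftrightarrow> t = Tc" by (rule opt)
    show "G_off \<upsilon> Pb Tc B \<sigma>2 l R h = - (2 powr (l / (B * Tc)) - 1) * (\<sigma>2 / h) * Tc"
      using G[OF opt] objTc by simp
  next
    assume H: "\<not> ((R \<le> thr \<and> l \<le> (\<upsilon> * Pb * h * Tc + R) / y) \<or> (R > thr \<and> l < c)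
           \<or> (R > thr \<and> c \<le> l \<and> l \<le> c'))"
    show "\<not> (\<exists>t. P8_feasible \<upsilon> Pb h Tc B \<sigma>2 R l t)"
    proof
      assume "\<exists>t. P8_feasible \<upsilon> Pb h Tc B \<sigma>2 R l t"
      then obtain t where t: "0 < t" "t \<le> Tc" "R + a*Tc + F t \<ge> 0" using feas by blast
      show False
      proof (cases "R \<le> thr")
        case True
        then have "l > (\<upsilon> * Pb * h * Tc + R) / y" using H by auto
        then have "y*l > a*Tc + R" unfolding a_def using y0 by (simp add: field_simps)
        then show False using Fle[OF t(1)] Ft0 t(3) by linarith
      next
        case False
        then have "c \<le> l" "\<not> l \<le> c'" using H by auto
        then have Tt0: "Tc \<le> t0" and neg: "R + a*Tc + F Tc < 0" using lc' c'iff by auto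
        have "F t \<le> F Tc" using FTc[of t] t Tt0 by (cases "t = Tc") auto
        then show False using neg t(3) by linarith
      qed
    qed
  qed
qed

end
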